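(* Let $P=(I,J,K)$ be a reduced presentation and let $a\in I$. Then $\mathbf{\L}_a$ is embeddable in $\mathbf B_\Delta$.
   Context: Wajsberg hoops: basic hoops satisfying $(x\to y)\to y\approx(y\to x)\to x$. $\Gamma(\mathbf G,u)$ is the Wajsberg hoop on $[0,u]$ with $ab=\max\{a+b-u,0\}$, $a\to b=\min\{u-a+b,u\}$; $\mathbf{\L}_n=\Gamma(\mathbb Z,n)$ (elements $0,\dots,n$), $\mathbf{\L}_{n,k}=\Gamma(\mathbb Z\times_l\mathbb Z,(n,k))$ (lexicographic order), $\mathbf{\L}_n^\infty=\mathbf{\L}_{n,0}$, $\mathbf C_\omega$ the negative cone of $\mathbb Z$, i.e. the free monoid on one generator $c$ with $c^l\to c^m=c^{\max(l-m,0)}$. In a bounded Wajsberg hoop, $\neg a=a\to0$. $X{\downarrow}$ = set of divisors of elements of $X$. A presentation $P=(I,J,K)$ ($I,J$ finite subsets of $\mathbb N\setminus\{0\}$, $K\subseteq\{\omega\}$) is reduced if $I\cup J\cup K\ne\emptyset$, $J\ne\emptyset\Rightarrow K=\emptyset$, no $m\in I$ divides any element of $(I\setminus\{m\})\cup J$, and no $n\in J$ divides any element of $J\setminus\{n\}$. Generators: for $k\ge2$, $0\le h<k$, $\gcd(k,h)=1$, $g_{k,h}$ is the unique element $a\in\mathbf{\L}_{k,h}$ with $a\le\neg a$ generating $\mathbf{\L}_{k,h}$; $g_{1,0}=(0,1)\in\mathbf{\L}_{1,0}$. Construction: $\Delta_I=\{(k,h,2):0\le h<k\in I{\downarrow},\gcd(k,h)=1\}$,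 $\Delta_J=\{(k,h,i):i\in\{0,1\},0\le h<k\in J{\downarrow},\gcd(k,h)=1\}$, $\Delta_K=\{(0,0,3)\}$ if $K=\{\omega\}$, else $\emptyset$; $\Delta=\Delta_I\cup\Delta_J\cup\Delta_K$; $\mathbf A^0_{k,h}=\mathbf A^1_{k,h}=\mathbf{\L}_{k,h}$, $\mathbf A^2_{k,h}=\mathbf{\L}_k$, $\mathbf A^3_{k,h}=\mathbf C_\omega$; $\mathbf A_\Delta=\prod_{(k,h,i)\in\Delta}\mathbf A^i_{k,h}$; $\bar g(k,h,0)=g_{k,h}$, $\bar g(k,h,1)=\neg g_{k,h}$, $\bar g(k,h,2)=h\in\mathbf{\L}_k$, $\bar g(0,0,3)=c$; $\mathbf B_\Delta$ is the subalgebra of $\mathbf A_\Delta$ generated by $\bar g$. *)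

theory Defs
  imports Main
begin

record 'a hoop_alg =
  hcarrier :: "'a set"
  hmult :: "'a \<Rightarrow> 'a \<Rightarrow> 'a"
  himp :: "'a \<Rightarrow> 'a \<Rightarrow> 'a"
  hone :: 'a

inductive_set hgen :: "'a hoop_alg \<Rightarrow> 'a set \<Rightarrow> 'a set" for A X where
  base: "x \<in> X \<Longrightarrow> x \<in> hcarrier A \<Longrightarrow> x \<in> hgen A X"
| one: "hone A \<in> hgen A X"
| mult: "x \<in> hgen A X \<Longrightarrow> y \<in> hgen A X \<Longrightarrow> hmult A x y \<in> hgen A X"
| imp: "x \<in> hgen A X \<Longrightarrow> y \<in> hgen A X \<Longrightarrow> himp A x y \<in> hgen A X"

definition subalg_gen :: "'a hoop_alg \<Rightarrow> 'a set \<Rightarrow> 'a hoop_alg" where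
  "subalg_gen A X = A\<lparr>hcarrier := hgen A X\<rparr>"

definition hoop_embeddable :: "'a hoop_alg \<Rightarrow> 'b hoop_alg \<Rightarrow> bool" where
  "hoop_embeddable A B \<longleftrightarrow> (\<exists>f. inj_on f (hcarrier A) \<and> f ` hcarrier A \<subseteq> hcarrier B \<and>
     f (hone A) = hone B \<and>
     (\<forall>x\<in>hcarrier A. \<forall>y\<in>hcarrier A.
        f (hmult A x y) = hmult B (f x) (f y) \<and> f (himp A x y) = himp B (f x) (f y)))"

definition lex_le :: "int \<times> int \<Rightarrow> int \<times> int \<Rightarrow> bool" where
  "lex_le x y \<longleftrightarrow> fst x < fst y \<or> (fst x = fst y \<and> snd x \<le> snd y)"

definition lex_max :: "int \<times> int \<Rightarrow> int \<times> int \<Rightarrow> int \<times> int" where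
  "lex_max x y = (if lex_le x y then y else x)"

definition lex_min :: "int \<times> int \<Rightarrow> int \<times> int \<Rightarrow> int \<times> int" where
  "lex_min x y = (if lex_le x y then x else y)"

definition padd :: "int \<times> int \<Rightarrow> int \<times> int \<Rightarrow> int \<times> int" where
  "padd x y = (fst x + fst y, snd x + snd y)"

definition psub :: "int \<times> int \<Rightarrow> int \<times> int \<Rightarrow> int \<times> int" where
  "psub x y = (fst x - fst y, snd x - snd y)"

definition Gamma_lex :: "int \<times> int \<Rightarrow> (int \<times> int) hoop_alg" where
  "Gamma_lex u = \<lparr> hcarrier = {x. lex_le (0,0) x \<and> lex_le x u},
     hmult = (\<lambda>a b. lex_max (psub (padd a b) u) (0,0)),
     himp = (\<lambda>a b. lex_min (padd (psub u a) b) u),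
     hone = u \<rparr>"

definition Luk2 :: "nat \<Rightarrow> nat \<Rightarrow> (int \<times> int) hoop_alg" where
  "Luk2 k h = Gamma_lex (int k, int h)"

definition Luk :: "nat \<Rightarrow> (int \<times> int) hoop_alg" where
  "Luk n = \<lparr> hcarrier = {(m,0) | m. 0 \<le> m \<and> m \<le> int n},
     hmult = (\<lambda>a b. (max (fst a + fst b - int n) 0, 0)),
     himp = (\<lambda>a b. (min (int n - fst a + fst b) (int n), 0)),
     hone = (int n, 0) \<rparr>"

text \<open>\<open>C\<^sub>\<omega>\<close>: negative cone of \<open>\<int>\<close>, element z \<le> 0 represented as (z,0);
  generator c = -1, so \<open>c^l\<close> is (-l,0).\<close>
definition Comega :: "(int \<times> int) hoop_alg" where
  "Comega = \<lparr> hcarrier = {(z,0) | z. z \<le> 0},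
     hmult = (\<lambda>a b. (fst a + fst b, 0)),
     himp = (\<lambda>a b. (min (fst b - fst a) 0, 0)),
     hone = (0, 0) \<rparr>"

definition neg_lex :: "nat \<Rightarrow> nat \<Rightarrow> int \<times> int \<Rightarrow> int \<times> int" where
  "neg_lex k h a = himp (Luk2 k h) a (0,0)"

definition gen_el :: "nat \<Rightarrow> nat \<Rightarrow> int \<times> int" where
  "gen_el k h = (if k = 1 \<and> h = 0 then (0,1)
     else (THE a. a \<in> hcarrier (Luk2 k h) \<and> lex_le a (neg_lex k h a) \<and>
                  hgen (Luk2 k h) {a} = hcarrier (Luk2 k h)))"

datatype omega = Omega

definition reduced :: "nat set \<Rightarrow> nat set \<Rightarrow> omega set \<Rightarrow> bool" where
  "reduced I J K \<longleftrightarrow> finite I \<and> finite J \<and> 0 \<notin> I \<and> 0 \<notin> J \<and>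
     (I \<noteq> {} \<or> J \<noteq> {} \<or> K \<noteq> {}) \<and>
     (J \<noteq> {} \<longrightarrow> K = {}) \<and>
     (\<forall>m\<in>I. \<forall>x\<in>(I - {m}) \<union> J. \<not> m dvd x) \<and>
     (\<forall>n\<in>J. \<forall>x\<in>J - {n}. \<not> n dvd x)"

definition divdown :: "nat set \<Rightarrow> nat set" where
  "divdown X = {d. \<exists>m\<in>X. d dvd m}"

definition Delta :: "nat set \<Rightarrow> nat set \<Rightarrow> omega set \<Rightarrow> (nat \<times> nat \<times> nat) set" where
  "Delta I J K =
     {(k,h,2) | k h. k \<in> divdown I \<and> h < k \<and> coprime k h} \<union>
     {(k,h,i) | k h i. i \<in> {0,1} \<and> k \<in> divdown J \<and> h < k \<and> coprime k h} \<union>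
     (if Omega \<in> K then {(0,0,3)} else {})"

definition comp_alg :: "nat \<times> nat \<times> nat \<Rightarrow> (int \<times> int) hoop_alg" where
  "comp_alg d = (case d of (k,h,i) \<Rightarrow>
     if i \<le> 1 then Luk2 k h else if i = 2 then Luk k else Comega)"

text \<open>Product over \<open>\<Delta>\<close>: functions supported on \<open>\<Delta>\<close> (value (0,0) outside).\<close>
definition prod_alg :: "(nat \<times> nat \<times> nat) set \<Rightarrow> (nat \<times> nat \<times> nat \<Rightarrow> int \<times> int) hoop_alg" where
  "prod_alg D = \<lparr> hcarrier = {f. (\<forall>d\<in>D. f d \<in> hcarrier (comp_alg d)) \<and> (\<forall>d. d \<notin> D \<longrightarrow> f d = (0,0))},
     hmult = (\<lambda>f g d. if d \<in> D then hmult (comp_alg d) (f d) (g d) else (0,0)),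
     himp = (\<lambda>f g d. if d \<in> D then himp (comp_alg d) (f d) (g d) else (0,0)),
     hone = (\<lambda>d. if d \<in> D then hone (comp_alg d) else (0,0)) \<rparr>"

definition gbar :: "(nat \<times> nat \<times> nat) set \<Rightarrow> nat \<times> nat \<times> nat \<Rightarrow> int \<times> int" where
  "gbar D d = (if d \<notin> D then (0,0) else (case d of (k,h,i) \<Rightarrow>
     if i = 0 then gen_el k h
     else if i = 1 then neg_lex k h (gen_el k h)
     else if i = 2 then (int h, 0)
     else (-1, 0)))"

definition B_Delta :: "nat set \<Rightarrow> nat set \<Rightarrow> omega set \<Rightarrow> (nat \<times> nat \<times> nat \<Rightarrow> int \<times> int) hoop_alg" where
  "B_Delta I J K = subalg_gen (prod_alg (Delta I J K)) {gbar (Delta I J K)}"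

end

theory Submission
  imports Defs
begin


definition cl :: "int\<times>int \<Rightarrow> int\<times>int \<Rightarrow> int\<times>int" where
  "cl u z = lex_min (lex_max z (0,0)) u"
definition gm :: "int\<times>int \<Rightarrow> int\<times>int \<Rightarrow> int\<times>int \<Rightarrow> int\<times>int" where
  "gm u a b = lex_max (psub (padd a b) u) (0,0)"
definition gi :: "int\<times>int \<Rightarrow> int\<times>int \<Rightarrow> int\<times>int \<Rightarrow> int\<times>int" where
  "gi u a b = lex_min (padd (psub u a) b) u"
definition go :: "int\<times>int \<Rightarrow> int\<times>int \<Rightarrow> int\<times>int \<Rightarrow> int\<times>int" where
  "go u a b = gi u (gi u a (gm u a b)) b"

abbreviation lt where "lt x y \<equiv> \<not> lex_le y x"

lemma lex_le_simp[simp]: "lex_le (a,b) (c,d) \<longleftrightarrow> a < c \<or> a = c \<and> b \<le> d"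
  by (simp add: lex_le_def)
lemma padd_simp[simp]: "padd (a,b) (c,d) = (a+c, b+d)" by (simp add: padd_def)
lemma psub_simp[simp]: "psub (a,b) (c,d) = (a-c, b-d)" by (simp add: psub_def)

lemma lex_trans: "lex_le x y \<Longrightarrow> lex_le y z \<Longrightarrow> lex_le x z"
  by (cases x; cases y; cases z) auto
lemma lex_total: "lex_le x y \<or> lex_le y x"
  by (cases x; cases y) auto
lemma lex_antisym: "lex_le x y \<Longrightarrow> lex_le y x \<Longrightarrow> x = y"
  by (cases x; cases y) auto
lemma lex_refl[simp]: "lex_le x x"
  by (cases x) auto
lemma lex_add_mono: "lex_le x y \<Longrightarrow> lex_le (padd x z) (padd y z)"
  by (cases x; cases y; cases z) auto
lemma lex_add_cancel[simp]: "lex_le (padd x z) (padd y z) \<longleftrightarrow> lex_le x y"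
  by (cases x; cases y; cases z) auto
lemma lex_sub_cancel[simp]: "lex_le (psub x z) (psub y z) \<longleftrightarrow> lex_le x y"
  by (cases x; cases y; cases z) auto

lemma max_l: "lex_le x y \<Longrightarrow> lex_max x y = y" by (simp add: lex_max_def)
lemma max_r: "lex_le y x \<Longrightarrow> lex_max x y = x" using lex_antisym by (auto simp add: lex_max_def)
lemma min_l: "lex_le x y \<Longrightarrow> lex_min x y = x" by (simp add: lex_min_def)
lemma min_r: "lex_le y x \<Longrightarrow> lex_min x y = y" using lex_antisym by (auto simp add: lex_min_def)

lemma cl_neg: "lex_le t (0,0) \<Longrightarrow> lex_le (0,0) u \<Longrightarrow> cl u t = (0,0)"
  by (simp add: cl_def max_l min_l)
lemma cl_mid: "lex_le (0,0) t \<Longrightarrow> lex_le t u \<Longrightarrow> cl u t = t"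
  by (simp add: cl_def max_r min_l)
lemma cl_big: "lex_le u t \<Longrightarrow> lex_le (0,0) u \<Longrightarrow> cl u t = u"
  using lex_trans by (simp add: cl_def max_r min_r)

lemma gm_simp: "gm u a b = lex_max (psub (padd a b) u) (0,0)" by (simp add: gm_def)

lemma G0: assumes "lex_le (0,0) a" "lex_le a u" "lex_le (0,0) b" "lex_le b u"
  shows "gi u a (gm u a b) = lex_max b (psub u a)"
  using assms by (cases a; cases b; cases u) (auto simp: gi_def gm_def lex_max_def lex_min_def)

lemma G1: assumes "lex_le (0,0) a" "lex_le a u" "lex_le (0,0) b" "lex_le b u"
  shows "go u a b = lex_min (padd a b) u"
proof -
  have e: "go u a b = gi u (lex_max b (psub u a)) b" unfolding go_def G0[OF assms] ..
  show ?thesis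
  proof (cases "lex_le b (psub u a)")
    case True
    then show ?thesis unfolding e using assms
      by (cases a; cases b; cases u) (simp add: gi_def lex_max_def lex_min_def)
  next
    case False
    then show ?thesis unfolding e using assms
      by (cases a; cases b; cases u) (auto simp add: gi_def lex_max_def lex_min_def)
  qed
qed




lemma nn_add: "lex_le (0,0) x \<Longrightarrow> lex_le (0,0) y \<Longrightarrow> lex_le (0,0) (padd x y)"
  by (cases x; cases y) auto
lemma le_addI: "lex_le (0,0) y \<Longrightarrow> lex_le x (padd x y)"
  by (cases x; cases y) auto
lemma padd_0[simp]: "padd (0,0) y = y" "padd y (0,0) = y" by (cases y, simp)+
lemma psub_padd[simp]: "psub (padd m u) u = m" by (cases m; cases u) auto

lemma gm_top: "lex_le (0,0) m \<Longrightarrow> gm u m u = m"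
  by (simp add: gm_def max_r)

lemma I3:
  assumes y: "lex_le (0,0) y" "lex_le y u"
  shows "cl u (padd t y) = gm u (go u (cl u t) y) (cl u (padd t u))"
proof -
  have u0: "lex_le (0,0) u" using y lex_trans by blast
  have c1: "lex_le (0,0) (cl u t)" "lex_le (cl u t) u" using u0
    by (cases t; cases u; auto simp: cl_def lex_max_def lex_min_def)+
  have e: "go u (cl u t) y = lex_min (padd (cl u t) y) u" using G1 c1 y by blast
  show ?thesis
  proof (cases "lex_le (0,0) t")
    case True
    have cu: "cl u (padd t u) = u" using True u0 by (intro cl_big) (cases t; cases u; auto)+
    show ?thesis
    proof (cases "lex_le t u")
      case True2: True
      have ct: "cl u t = t" using True True2 by (rule cl_mid)
      have tn: "lex_le (0,0) (padd t y)" using True y nn_add by blast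
      have m0: "lex_le (0,0) (lex_min (padd t y) u)" using tn u0 by (simp add: lex_min_def)
      have "cl u (padd t y) = lex_min (padd t y) u" unfolding cl_def using tn by (simp add: max_r)
      moreover have "go u t y = lex_min (padd t y) u" using e ct by simp
      ultimately show ?thesis unfolding cu ct using gm_top[OF m0] by simp
    next
      case False
      have ct: "cl u t = u" using False u0 lex_total cl_big by blast
      have "lex_le u (padd t y)" using False lex_total le_addI lex_trans y by metis
      then have c2: "cl u (padd t y) = u" using cl_big u0 by blast
      have "lex_min (padd u y) u = u" using le_addI[OF y(1)] by (rule min_r)
      moreover have "go u u y = lex_min (padd u y) u" using e ct by simp
      ultimately show ?thesis unfolding cu ct c2 using gm_top[OF u0] by simp
    qed
  next
    case False
    then have ct: "cl u t = (0,0)" using u0 cl_neg lex_total by blast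
    have ey: "go u (cl u t) y = y" using e y by (simp add: ct min_l)
    have ty: "lex_le (padd t y) y" using False lex_total by (cases t; cases y) auto
    show ?thesis
    proof (cases "lex_le (0,0) (padd t u)")
      case True
      have cu: "cl u (padd t u) = padd t u" proof (rule cl_mid[OF True])
        show "lex_le (padd t u) u" using False by (cases t; cases u) auto
      qed
      have "psub (padd y (padd t u)) u = padd t y" by (cases t; cases u; cases y) auto
      then have g: "gm u y (padd t u) = lex_max (padd t y) (0,0)" by (simp add: gm_def)
      have "lex_le (lex_max (padd t y) (0,0)) u"
        using lex_trans[OF ty y(2)] u0 by (simp add: lex_max_def)
      then have "cl u (padd t y) = lex_max (padd t y) (0,0)" by (simp add: cl_def min_l)
      then show ?thesis using ey cu g by simp
    next
      case False2: False
      then have cu: "cl u (padd t u) = (0,0)" using u0 cl_neg lex_total by blast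
      have "lex_le (padd t y) (padd t u)" using y by (cases t; cases y; cases u) auto
      then have "lex_le (padd t y) (0,0)" using False2 lex_total lex_trans by blast
      then have c2: "cl u (padd t y) = (0,0)" using cl_neg u0 by blast
      have "gm u y (0,0) = (0,0)" using y by (simp add: gm_def) (cases y; cases u; auto simp: lex_max_def)
      then show ?thesis using ey cu c2 by simp
    qed
  qed
qed



datatype tm = V | Mu tm tm | Im tm tm

primrec ev :: "'a hoop_alg \<Rightarrow> 'a \<Rightarrow> tm \<Rightarrow> 'a" where
  "ev A x V = x"
| "ev A x (Mu s t) = hmult A (ev A x s) (ev A x t)"
| "ev A x (Im s t) = himp A (ev A x s) (ev A x t)"

definition Op :: "tm \<Rightarrow> tm \<Rightarrow> tm" where "Op s t = Im (Im s (Mu s t)) t"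

primrec Tm :: "nat \<Rightarrow> nat \<Rightarrow> tm" where
  "Tm 0 c = V"
| "Tm (Suc M) c = (if M = 0 then V else if c = M then Mu V (Tm M (c-1))
     else if c = 0 then Op (Tm M 0) V else Mu (Op (Tm M c) V) (Tm M (c-1)))"

definition sm :: "int \<Rightarrow> int \<times> int \<Rightarrow> int \<times> int" where
  "sm n x = (n * fst x, n * snd x)"
definition lin :: "nat \<Rightarrow> nat \<Rightarrow> int\<times>int \<Rightarrow> int\<times>int \<Rightarrow> int\<times>int" where
  "lin M c y u = psub (sm (int M) y) (sm (int c) u)"

lemma ev_G_mult[simp]: "hmult (Gamma_lex u) = gm u" by (simp add: Gamma_lex_def gm_def[abs_def])
lemma ev_G_imp[simp]: "himp (Gamma_lex u) = gi u" by (simp add: Gamma_lex_def gi_def[abs_def])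
lemma ev_G_Op[simp]: "ev (Gamma_lex u) y (Op s t) = go u (ev (Gamma_lex u) y s) (ev (Gamma_lex u) y t)"
  by (simp add: Op_def go_def)

lemma sm_mono: assumes "lex_le y u" "n > 0" shows "lex_le (sm n y) (sm n u)"
  using assms by (cases y; cases u) (auto simp: sm_def)

lemma max_le: "lex_le v u \<Longrightarrow> lex_le (0,0) u \<Longrightarrow> lex_le (lex_max v (0,0)) u"
  by (simp add: lex_max_def)

lemma La: assumes "lex_le w u" "lex_le (0,0) y" "lex_le y u"
  shows "gm u y (cl u w) = cl u (psub (padd y w) u)"
proof (cases "lex_le (0,0) w")
  case True
  then have "cl u w = w" using assms cl_mid by blast
  moreover have "lex_le (psub (padd y w) u) u" using assms by (cases w; cases y; cases u) auto
  moreover have "lex_le (0,0) u" using assms lex_trans by blast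
  ultimately show ?thesis by (simp add: gm_def cl_def min_l max_le)
next
  case False
  then have cw: "cl u w = (0,0)" using cl_neg lex_total lex_trans assms by metis
  have "lex_le (psub (padd y w) u) (0,0)" using False assms by (cases w; cases y; cases u) auto
  then have "cl u (psub (padd y w) u) = (0,0)" using cl_neg lex_trans assms by blast
  moreover have "lex_le (psub (padd y (0,0)) u) (0,0)" using assms by (cases y; cases u) auto
  ultimately show ?thesis unfolding cw by (simp add: gm_def max_l)
qed

lemma Lb: assumes "lex_le (0,0) w" "lex_le (0,0) y" "lex_le y u"
  shows "go u (cl u w) y = cl u (padd w y)"
proof -
  have u0: "lex_le (0,0) u" using assms lex_trans by blast
  have c1: "lex_le (0,0) (cl u w)" "lex_le (cl u w) u" using u0
    by (cases w; cases u; auto simp: cl_def lex_max_def lex_min_def)+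
  have e: "go u (cl u w) y = lex_min (padd (cl u w) y) u" using G1 c1 assms by blast
  have s: "lex_le (0,0) (padd w y)" using assms nn_add by blast
  show ?thesis
  proof (cases "lex_le w u")
    case True
    then have "cl u w = w" using assms cl_mid by blast
    then show ?thesis using e s by (simp add: cl_def max_r)
  next
    case False
    then have "cl u w = u" using cl_big lex_total u0 by blast
    moreover have "lex_le u (padd w y)" using False lex_total le_addI assms lex_trans by metis
    ultimately show ?thesis using e s le_addI[OF assms(2), of u] by (simp add: cl_def max_r min_r)
  qed
qed

lemma TmG: assumes y: "lex_le (0,0) y" "lex_le y u"
  shows "c \<le> M \<Longrightarrow> ev (Gamma_lex u) y (Tm (Suc M) c) = cl u (lin (Suc M) c y u)"
proof (induction M arbitrary: c)
  case 0
  then show ?case using y by (cases y; cases u) (simp add: lin_def sm_def cl_mid)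
next
  case (Suc M)
  show ?case
  proof (cases "c = Suc M")
    case True
    have ih: "ev (Gamma_lex u) y (Tm (Suc M) M) = cl u (lin (Suc M) M y u)" using Suc.IH by simp
    have "lex_le (sm (int (Suc M)) y) (sm (int (Suc M)) u)" using y(2) by (rule sm_mono) simp
    then have le: "lex_le (lin (Suc M) M y u) u"
      by (cases y; cases u) (auto simp: lin_def sm_def algebra_simps)
    have eq: "psub (padd y (lin (Suc M) M y u)) u = lin (Suc (Suc M)) c y u"
      using True by (cases y; cases u) (simp add: lin_def sm_def algebra_simps)
    show ?thesis using True ih La[OF le y] eq by simp
  next
    case False
    note F = False
    show ?thesis
    proof (cases "c = 0")
      case True
      have ih: "ev (Gamma_lex u) y (Tm (Suc M) 0) = cl u (lin (Suc M) 0 y u)" using Suc.IH by simp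
      have nn: "lex_le (0,0) (lin (Suc M) 0 y u)" using y
        by (cases y) (auto simp: lin_def sm_def)
      have eq: "padd (lin (Suc M) 0 y u) y = lin (Suc (Suc M)) c y u"
        using True by (cases y; cases u) (simp add: lin_def sm_def algebra_simps)
      show ?thesis using True ih Lb[OF nn y] eq by simp
    next
      case False
      have c: "c \<le> M" "c - 1 \<le> M" using F Suc.prems by auto
      have eq1: "padd (lin (Suc M) c y u) y = lin (Suc (Suc M)) c y u"
        by (cases y; cases u) (simp add: lin_def sm_def algebra_simps)
      have eq2: "padd (lin (Suc M) c y u) u = lin (Suc M) (c - 1) y u"
        using False by (cases y; cases u) (simp add: lin_def sm_def algebra_simps of_nat_diff)
      show ?thesis using F False Suc.IH[OF c(1)] Suc.IH[OF c(2)] I3[OF y, of "lin (Suc M) c y u"] eq1 eq2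
        by simp
    qed
  qed
qed



lemma ev_hgen: "x \<in> hgen A X \<Longrightarrow> ev A x t \<in> hgen A X"
  by (induction t) (auto intro: hgen.intros)

lemma G_carrier: "hcarrier (Gamma_lex u) = {x. lex_le (0,0) x \<and> lex_le x u}"
  by (simp add: Gamma_lex_def)
lemma G_one[simp]: "hone (Gamma_lex u) = u" by (simp add: Gamma_lex_def)

lemma gm_in: "lex_le (0,0) u \<Longrightarrow> lex_le (0,0) a \<Longrightarrow> lex_le a u \<Longrightarrow> lex_le (0,0) b \<Longrightarrow> lex_le b u
   \<Longrightarrow> lex_le (0,0) (gm u a b) \<and> lex_le (gm u a b) u"
  by (cases a; cases b; cases u) (auto simp: gm_def lex_max_def)
lemma gi_in: "lex_le (0,0) u \<Longrightarrow> lex_le (0,0) a \<Longrightarrow> lex_le a u \<Longrightarrow> lex_le (0,0) b \<Longrightarrow> lex_le b u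
   \<Longrightarrow> lex_le (0,0) (gi u a b) \<and> lex_le (gi u a b) u"
  by (cases a; cases b; cases u) (auto simp: gi_def lex_min_def)

lemma hgen_G_sub: assumes "lex_le (0,0) u" shows "hgen (Gamma_lex u) X \<subseteq> hcarrier (Gamma_lex u)"
proof
  fix x assume "x \<in> hgen (Gamma_lex u) X"
  then show "x \<in> hcarrier (Gamma_lex u)"
  proof induction
    case (mult x y) then show ?case using gm_in[OF assms] by (simp add: G_carrier)
  next
    case (imp x y) then show ?case using gi_in[OF assms] by (simp add: G_carrier)
  qed (use assms in \<open>auto simp: G_carrier\<close>)
qed

section \<open>uniqueness of the generator\<close>

lemma hgen_lattice:
  assumes "x \<in> hgen (Gamma_lex u) {a}"
  shows "\<exists>i j. x = (i * fst a + j * fst u, i * snd a + j * snd u)"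
  using assms
proof induction
  case (base x) then show ?case by (intro exI[of _ 1] exI[of _ 0]) auto
next
  case one then show ?case by (intro exI[of _ 0] exI[of _ 1]) auto
next
  case (mult x y)
  then obtain i j i' j' where x: "x = (i * fst a + j * fst u, i * snd a + j * snd u)"
    and y: "y = (i' * fst a + j' * fst u, i' * snd a + j' * snd u)" by blast
  show ?case
  proof (cases "lex_le (psub (padd x y) u) (0,0)")
    case True
    then show ?thesis by (intro exI[of _ 0] exI[of _ 0]) (simp add: gm_def max_l)
  next
    case False
    then have "lex_le (0,0) (psub (padd x y) u)" using lex_total by blast
    then have eq: "gm u x y = psub (padd x y) u" unfolding gm_def by (rule max_r)
    show ?thesis unfolding ev_G_mult eq unfolding x y
      by (rule exI[of _ "i+i'"], rule exI[of _ "j+j'-1"]) (simp add: psub_def padd_def algebra_simps)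
  qed
next
  case (imp x y)
  then obtain i j i' j' where x: "x = (i * fst a + j * fst u, i * snd a + j * snd u)"
    and y: "y = (i' * fst a + j' * fst u, i' * snd a + j' * snd u)" by blast
  show ?case
  proof (cases "lex_le (padd (psub u x) y) u")
    case True
    then have eq: "gi u x y = padd (psub u x) y" unfolding gi_def by (rule min_l)
    show ?thesis unfolding ev_G_imp eq unfolding x y
      by (rule exI[of _ "i' - i"], rule exI[of _ "1 - j + j'"]) (simp add: psub_def padd_def algebra_simps)
  next
    case False
    then have "lex_le u (padd (psub u x) y)" using lex_total by blast
    then have eq: "gi u x y = u" unfolding gi_def by (rule min_r)
    show ?thesis unfolding ev_G_imp eq
      by (rule exI[of _ 0], rule exI[of _ 1]) simp
  qed
qed

lemma det_pm1:
  fixes p q k h i j i' j' :: int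
  assumes "(1,0) = (i * p + j * k, i * q + j * h)" "(0,1) = (i' * p + j' * k, i' * q + j' * h)"
  shows "p * h - q * k = 1 \<or> p * h - q * k = -1"
proof -
  have "(p * h - q * k) * (i * j' - i' * j) = 1"
    using assms by simp algebra
  then show ?thesis using pos_zmult_eq_1_iff_lemma by blast
qed




lemma dvd_small_zero: fixes x k :: int assumes "k dvd x" "\<bar>x\<bar> < k" shows "x = 0"
proof (rule ccontr)
  assume "x \<noteq> 0"
  then have "\<bar>k\<bar> \<le> \<bar>x\<bar>" using dvd_imp_le_int assms(1) by blast
  then show False using assms(2) by linarith
qed

lemma pm1_k: fixes q k :: int assumes "k \<ge> 2" "q * k = 1 \<or> q * k = -1" shows False
proof -
  have "1 = k * q \<or> 1 = k * (-q)" using assms(2) by (auto simp: algebra_simps)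
  then have "k dvd 1" by (elim disjE) (rule dvdI, assumption)+
  then have "k \<le> 1" by (intro zdvd_imp_le) auto
  then show False using assms(1) by simp
qed

lemma uniq_nt:
  fixes k h p q p' q' :: int
  assumes k: "k \<ge> 2" and h: "1 \<le> h" "h < k" and cop: "coprime k h"
    and e: "p*h - q*k = 1 \<or> p*h - q*k = -1" and e': "p'*h - q'*k = 1 \<or> p'*h - q'*k = -1"
    and l1: "0 < p \<or> p = 0 \<and> 0 \<le> q" and l2: "2*p < k \<or> 2*p = k \<and> 2*q \<le> h"
    and l1': "0 < p' \<or> p' = 0 \<and> 0 \<le> q'" and l2': "2*p' < k \<or> 2*p' = k \<and> 2*q' \<le> h"
  shows "p = p' \<and> q = q'"
proof -
  have p0: "p > 0"
  proof (rule ccontr)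
    assume "\<not> p > 0" then have "p = 0" using l1 by auto
    then have "(-q) * k = 1 \<or> (-q) * k = -1" using e by auto
    then show False using pm1_k k by blast
  qed
  have p0': "p' > 0"
  proof (rule ccontr)
    assume "\<not> p' > 0" then have "p' = 0" using l1' by auto
    then have "(-q') * k = 1 \<or> (-q') * k = -1" using e' by auto
    then show False using pm1_k k by blast
  qed
  have pk: "2*p \<le> k" "2*p' \<le> k" using l2 l2' by auto
  show ?thesis
  proof (cases "p*h - q*k = p'*h - q'*k")
    case True
    then have "(p - p') * h = (q - q') * k" by (simp add: algebra_simps)
    then have "k dvd (p - p') * h" by simp
    then have "k dvd (p - p')" using coprime_dvd_mult_left_iff[OF cop] by blast
    moreover have "\<bar>p - p'\<bar> < k" using p0 p0' pk by auto
    ultimately have "p - p' = 0" by (rule dvd_small_zero)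
    then have "p = p'" by simp
    moreover then have "q * k = q' * k" using True by simp
    ultimately show ?thesis using k by simp
  next
    case False
    then have "(p + p') * h = (q + q') * k" using e e' by (auto simp: algebra_simps)
    then have "k dvd (p + p') * h" by simp
    then have "k dvd (p + p')" using coprime_dvd_mult_left_iff[OF cop] by blast
    then have "k \<le> p + p'" using p0 p0' by (intro zdvd_imp_le) auto
    then have pp: "2*p = k" "2*p' = k" using pk by auto
    then have "p * (h - 2*q) = 1 \<or> p * (h - 2*q) = -1" using e by (auto simp: algebra_simps)
    moreover have "p * (-(h - 2*q)) = - (p * (h - 2*q))" by (simp only: mult_minus_right)
    ultimately have "p * (h - 2*q) = 1 \<or> p * (-(h - 2*q)) = 1" by linarith
    then have "p = 1 \<or> p = -1" using pos_zmult_eq_1_iff_lemma by blast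
    then have "p = 1" using p0 by simp
    then have k2: "k = 2" and h1: "h = 1" using pp h by auto
    have a1: "2*q \<le> 1" "2*q' \<le> 1" using l2 l2' pp h1 by auto
    have p1: "p' = 1" using pp \<open>p = 1\<close> by simp
    have "1 - 2*q = 1 \<or> 1 - 2*q = -1" "1 - 2*q' = 1 \<or> 1 - 2*q' = -1"
      using e e' \<open>p = 1\<close> p1 k2 h1 by simp_all
    then have "q = 0" "q' = 0" using a1 by auto
    then show ?thesis using \<open>p = 1\<close> p1 by simp
  qed
qed



lemma S_in: assumes "lex_le (0,0) U" "x \<in> hgen (Gamma_lex U) X" shows "lex_le (0,0) x" "lex_le x U"
  using hgen_G_sub[OF assms(1)] assms(2) by (auto simp: G_carrier)

lemma S_gm: "x \<in> hgen (Gamma_lex U) X \<Longrightarrow> y \<in> hgen (Gamma_lex U) X \<Longrightarrow> gm U x y \<in> hgen (Gamma_lex U) X"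
  using hgen.mult[of x "Gamma_lex U" X y] by simp
lemma S_gi: "x \<in> hgen (Gamma_lex U) X \<Longrightarrow> y \<in> hgen (Gamma_lex U) X \<Longrightarrow> gi U x y \<in> hgen (Gamma_lex U) X"
  using hgen.imp[of x "Gamma_lex U" X y] by simp
lemma S_one: "U \<in> hgen (Gamma_lex U) X"
  using hgen.one[of "Gamma_lex U" X] by simp

lemma S_add: assumes U0: "lex_le (0,0) U" and v: "v \<in> hgen (Gamma_lex U) X" and w: "w \<in> hgen (Gamma_lex U) X"
  and le: "lex_le (padd v w) U" shows "padd v w \<in> hgen (Gamma_lex U) X"
proof -
  have "go U v w \<in> hgen (Gamma_lex U) X" unfolding go_def using v w by (intro S_gi S_gm)
  moreover have "go U v w = lex_min (padd v w) U" using G1 S_in[OF U0 v] S_in[OF U0 w] by blast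
  ultimately show ?thesis using le by (simp add: min_l)
qed

lemma S_diff: assumes U0: "lex_le (0,0) U" and z: "(0,0) \<in> hgen (Gamma_lex U) X"
  and v: "v \<in> hgen (Gamma_lex U) X" and w: "w \<in> hgen (Gamma_lex U) X"
  and le: "lex_le v w" shows "psub w v \<in> hgen (Gamma_lex U) X"
proof -
  have w1: "lex_le w U" using S_in[OF U0 w] by simp
  have "lex_le (padd (psub U w) v) U" using le by (cases v; cases w; cases U) auto
  then have e1: "gi U w v = padd (psub U w) v" by (simp add: gi_def min_l)
  have "lex_le (padd (psub U (padd (psub U w) v)) (0,0)) U" using S_in[OF U0 v] S_in[OF U0 w] le
    by (cases v; cases w; cases U) auto
  then have "gi U (padd (psub U w) v) (0,0) = padd (psub U (padd (psub U w) v)) (0,0)"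
    unfolding gi_def by (rule min_l)
  also have "\<dots> = psub w v" by (cases v; cases w; cases U) simp
  finally have e2: "gi U (gi U w v) (0,0) = psub w v" unfolding e1 .
  have "gi U (gi U w v) (0,0) \<in> hgen (Gamma_lex U) X" using v w z by (intro S_gi)
  then show ?thesis using e2 by simp
qed

lemma euclid:
  assumes U0: "lex_le (0,0) U" and z: "(0,0) \<in> hgen (Gamma_lex U) X"
  shows "\<forall>v w. v \<in> hgen (Gamma_lex U) X \<and> w \<in> hgen (Gamma_lex U) X \<and> v \<noteq> (0,0) \<and> w \<noteq> (0,0)
     \<and> nat (fst v + fst w) = n \<and> (fst v * snd w - snd v * fst w = 1 \<or> fst v * snd w - snd v * fst w = -1)
     \<longrightarrow> (0,1) \<in> hgen (Gamma_lex U) X \<and> (\<exists>z. (1,z) \<in> hgen (Gamma_lex U) X)"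
proof (induction n rule: less_induct)
  case (less n)
  show ?case
  proof (intro allI impI, elim conjE)
    fix v w
    assume v: "v \<in> hgen (Gamma_lex U) X" and w: "w \<in> hgen (Gamma_lex U) X"
      and v0: "v \<noteq> (0,0)" and w0: "w \<noteq> (0,0)" and n: "nat (fst v + fst w) = n"
      and d: "fst v * snd w - snd v * fst w = 1 \<or> fst v * snd w - snd v * fst w = -1"
    obtain v1 v2 where vv: "v = (v1,v2)" by (cases v)
    obtain w1 w2 where ww: "w = (w1,w2)" by (cases w)
    have lv: "0 < v1 \<or> v1 = 0 \<and> 0 \<le> v2" using S_in(1)[OF U0 v] vv by simp
    have lw: "0 < w1 \<or> w1 = 0 \<and> 0 \<le> w2" using S_in(1)[OF U0 w] ww by simp
    show "(0,1) \<in> hgen (Gamma_lex U) X \<and> (\<exists>z. (1,z) \<in> hgen (Gamma_lex U) X)"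
    proof (cases "v1 = 0")
      case True
      then have v2: "v2 > 0" using lv v0 vv by auto
      have w1: "w1 \<ge> 0" using lw by auto
      have "v2 * w1 = 1 \<or> v2 * w1 = -1" using d True vv ww by (auto simp: algebra_simps)
      moreover have "v2 * w1 \<ge> 0" using v2 w1 by simp
      ultimately have "v2 * w1 = 1" by linarith
      then have "v2 = 1 \<and> w1 = 1" using pos_zmult_eq_1_iff[OF v2] by blast
      then show ?thesis using v w vv ww True by auto
    next
      case F1: False
      show ?thesis
      proof (cases "w1 = 0")
        case True
        then have w2: "w2 > 0" using lw w0 ww by auto
        have v1: "v1 \<ge> 0" using lv by auto
        have "w2 * v1 = 1 \<or> w2 * v1 = -1" using d True vv ww by (auto simp: algebra_simps)
        moreover have "w2 * v1 \<ge> 0" using w2 v1 by simp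
        ultimately have "w2 * v1 = 1" by linarith
        then have "w2 = 1 \<and> v1 = 1" using pos_zmult_eq_1_iff[OF w2] by blast
        then show ?thesis using v w vv ww True by auto
      next
        case F2: False
        have v1: "v1 > 0" "w1 > 0" using lv lw F1 F2 by auto
        show ?thesis
        proof (cases "lex_le v w")
          case True
          have w': "psub w v \<in> hgen (Gamma_lex U) X" using S_diff[OF U0 z v w True] .
          have "psub w v \<noteq> (0,0)"
          proof
            assume "psub w v = (0,0)"
            then have "w = v" using vv ww by simp
            then show False using d vv ww by (simp add: algebra_simps)
          qed
          moreover have lt: "nat (fst v + fst (psub w v)) < n" using n v1 vv ww by simp
          moreover have "fst v * snd (psub w v) - snd v * fst (psub w v) = fst v * snd w - snd v * fst w"
            using vv ww by (simp add: algebra_simps)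
          ultimately show ?thesis using less.IH[rule_format, OF lt, of v "psub w v"] v w' v0 d by simp
        next
          case False
          then have le: "lex_le w v" using lex_total by blast
          have v': "psub v w \<in> hgen (Gamma_lex U) X" using S_diff[OF U0 z w v le] .
          have "psub v w \<noteq> (0,0)"
          proof
            assume "psub v w = (0,0)"
            then have "w = v" using vv ww by simp
            then show False using d vv ww by (simp add: algebra_simps)
          qed
          moreover have lt: "nat (fst (psub v w) + fst w) < n" using n v1 vv ww by simp
          moreover have "fst (psub v w) * snd w - snd (psub v w) * fst w = fst v * snd w - snd v * fst w"
            using vv ww by (simp add: algebra_simps)
          ultimately show ?thesis using less.IH[rule_format, OF lt, of "psub v w" w] v' w w0 d by simp
        qed
      qed
    qed
  qed
qed

lemma fill:
  assumes k: "k \<ge> 1" and z: "(0,0) \<in> hgen (Gamma_lex (k,hh)) X"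
    and e: "(0,1) \<in> hgen (Gamma_lex (k,hh)) X" and f: "(1,zz) \<in> hgen (Gamma_lex (k,hh)) X"
    and x: "lex_le (0,0) x" "lex_le x (k,hh)"
  shows "x \<in> hgen (Gamma_lex (k,hh)) X"
proof -
  let ?S = "hgen (Gamma_lex (k,hh)) X"
  have U0: "lex_le (0,0) (k,hh)" using k by simp
  have up: "padd y (0,1) \<in> ?S" if "y \<in> ?S" "lex_le (padd y (0,1)) (k,hh)" for y
    using S_add[OF U0 that(1) e that(2)] .
  have down: "psub y (0,1) \<in> ?S" if "y \<in> ?S" "lex_le (0,1) y" for y
    using S_diff[OF U0 z e that(1) that(2)] .
  have mult: "(int m, int m * zz) \<in> ?S" if "int m \<le> k - 1" for m
    using that
  proof (induction m)
    case 0 then show ?case using z by simp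
  next
    case (Suc m)
    then have "(int m, int m * zz) \<in> ?S" by simp
    moreover have "lex_le (padd (int m, int m * zz) (1,zz)) (k,hh)" using Suc.prems by simp
    ultimately have "padd (int m, int m * zz) (1,zz) \<in> ?S" using S_add[OF U0 _ f] by blast
    then show ?case by (simp add: algebra_simps)
  qed
  obtain x1 x2 where xx: "x = (x1,x2)" by (cases x)
  have "x1 \<ge> 0" "x1 \<le> k" using x xx by auto
  show ?thesis
  proof (cases "x1 = 0")
    case True
    then have x2: "x2 \<ge> 0" using x xx by auto
    have "(0, int n) \<in> ?S" for n
    proof (induction n)
      case 0 then show ?case using z by simp
    next
      case (Suc n)
      have "padd (0, int n) (0,1) \<in> ?S" using up[OF Suc] k by simp
      then show ?case by (simp add: add.commute)
    qed
    from this[of "nat x2"] show ?thesis using True xx x2 by simp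
  next
    case F: False
    show ?thesis
    proof (cases "x1 = k")
      case True
      then have x2: "x2 \<le> hh" using x xx by auto
      have "(k, hh - int n) \<in> ?S" for n
      proof (induction n)
        case 0 then show ?case using S_one[of "(k,hh)" X] by simp
      next
        case (Suc n)
        have "psub (k, hh - int n) (0,1) \<in> ?S" using down[OF Suc] k by simp
        then show ?case by (simp add: algebra_simps)
      qed
      from this[of "nat (hh - x2)"] show ?thesis using True xx x2 by simp
    next
      case False
      then have x1: "1 \<le> x1" "x1 \<le> k - 1" using F \<open>x1 \<ge> 0\<close> \<open>x1 \<le> k\<close> by auto
      have m: "(x1, x1 * zz) \<in> ?S" using mult[of "nat x1"] x1 by simp
      have all: "(x1, x1 * zz + int n) \<in> ?S \<and> (x1, x1 * zz - int n) \<in> ?S" for n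
      proof (induction n)
        case 0 then show ?case using m by simp
      next
        case (Suc n)
        have "padd (x1, x1 * zz + int n) (0,1) \<in> ?S" using Suc x1 by (intro up) auto
        moreover have "psub (x1, x1 * zz - int n) (0,1) \<in> ?S" using Suc x1 by (intro down) auto
        ultimately show ?case by (simp add: algebra_simps)
      qed
      show ?thesis
      proof (cases "x2 \<ge> x1 * zz")
        case True
        then have "x1 * zz + int (nat (x2 - x1 * zz)) = x2" by simp
        then show ?thesis using all[of "nat (x2 - x1 * zz)"] xx by simp
      next
        case False
        then have "x1 * zz - int (nat (x1 * zz - x2)) = x2" by simp
        then show ?thesis using all[of "nat (x1 * zz - x2)"] xx by simp
      qed
    qed
  qed
qed




lemma exist_pq:
  fixes k h :: int
  assumes k: "k \<ge> 2" and h: "1 \<le> h" "h < k" and cop: "coprime k h"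
  shows "\<exists>p q. (p*h - q*k = 1 \<or> p*h - q*k = -1) \<and> 0 < p \<and> (2*p < k \<or> 2*p = k \<and> 2*q \<le> h)"
proof -
  have "gcd h k = 1" using cop by (simp add: coprime_iff_gcd_eq_1 gcd.commute)
  then obtain s t where st: "s * h + t * k = 1" using bezout_int[of h k] by auto
  define r where "r = s mod k"
  define m where "m = s div k"
  have sr: "s = m * k + r" unfolding r_def m_def by simp
  have r0: "0 \<le> r" "r < k" unfolding r_def using k by auto
  define q0 where "q0 = -(m*h + t)"
  have e: "r*h - q0*k = 1" unfolding q0_def using st sr by (simp add: algebra_simps)
  have "r \<noteq> 0"
  proof
    assume "r = 0"
    then have "(-q0) * k = 1 \<or> (-q0)*k = -1" using e by simp
    then show False using pm1_k k by blast
  qed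
  then have rp: "r > 0" using r0 by simp
  show ?thesis
  proof (cases "2*r \<le> k")
    case True
    have "2*r < k \<or> 2*r = k \<and> 2*q0 \<le> h"
    proof (cases "2*r = k")
      case True
      then have "r * (h - 2*q0) = 1" using e by (simp add: algebra_simps)
      then have "h - 2*q0 > 0" using rp by (metis zero_less_mult_pos zero_less_one)
      then show ?thesis using True by simp
    qed (use True in simp)
    then show ?thesis using e rp by blast
  next
    case False
    have "(k - r)*h - (h - q0)*k = -1" using e by (simp add: algebra_simps)
    moreover have "0 < k - r" "2*(k-r) < k" using False r0 by auto
    ultimately show ?thesis by blast
  qed
qed

lemma neg_lex_eq: assumes "lex_le (0,0) a" "lex_le a (int k, int h)"
  shows "neg_lex k h a = psub (int k, int h) a"
proof -
  have "lex_le (padd (psub (int k, int h) a) (0,0)) (int k, int h)" using assms by (cases a) auto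
  then show ?thesis by (simp add: neg_lex_def Luk2_def gi_def[symmetric] gi_def min_l)
qed

lemma Luk2_G: "Luk2 k h = Gamma_lex (int k, int h)" by (simp add: Luk2_def)

lemma gen_unique:
  assumes k: "k \<ge> 2" "1 \<le> h" "h < k" "coprime k h"
    and a: "a \<in> hcarrier (Luk2 k h)" "lex_le a (neg_lex k h a)" "hgen (Luk2 k h) {a} = hcarrier (Luk2 k h)"
    and b: "b \<in> hcarrier (Luk2 k h)" "lex_le b (neg_lex k h b)" "hgen (Luk2 k h) {b} = hcarrier (Luk2 k h)"
  shows "a = b"
proof -
  let ?U = "(int k, int h)"
  have c10: "(1,0) \<in> hcarrier (Luk2 k h)" "(0,1) \<in> hcarrier (Luk2 k h)" using k by (auto simp: Luk2_G G_carrier)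
  have props: "(fst x*int h - snd x*int k = 1 \<or> fst x*int h - snd x*int k = -1) \<and>
       (0 < fst x \<or> fst x = 0 \<and> 0 \<le> snd x) \<and> (2*fst x < int k \<or> 2*fst x = int k \<and> 2*snd x \<le> int h)"
    if x: "x \<in> hcarrier (Luk2 k h)" "lex_le x (neg_lex k h x)" "hgen (Luk2 k h) {x} = hcarrier (Luk2 k h)" for x
  proof -
    have "(1,0) \<in> hgen (Gamma_lex ?U) {x}" "(0,1) \<in> hgen (Gamma_lex ?U) {x}" using x(3) c10 by (auto simp: Luk2_G)
    from hgen_lattice[OF this(1)] hgen_lattice[OF this(2)]
    obtain i j i' j' where "(1,0) = (i * fst x + j * int k, i * snd x + j * int h)"
      "(0,1) = (i' * fst x + j' * int k, i' * snd x + j' * int h)" by auto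
    then have d: "fst x*int h - snd x*int k = 1 \<or> fst x*int h - snd x*int k = -1" by (rule det_pm1)
    have x0: "lex_le (0,0) x" "lex_le x ?U" using x(1) by (auto simp: Luk2_G G_carrier)
    have "lex_le x (psub ?U x)" using x(2) neg_lex_eq[OF x0] by simp
    then show ?thesis using d x0 by (cases x) auto
  qed
  have "coprime (int k) (int h)" using k by simp
  note pa = props[OF a] and pb = props[OF b]
  have k': "int k \<ge> 2" "1 \<le> int h" "int h < int k" using k by auto
  have "fst a = fst b \<and> snd a = snd b"
    by (rule uniq_nt[OF k' \<open>coprime (int k) (int h)\<close>]) (use pa pb in blast)+
  then show ?thesis by (simp add: prod_eq_iff)
qed

lemma gen_exists:
  assumes k: "k \<ge> 2" "1 \<le> h" "h < k" "coprime k h"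
  shows "\<exists>a. a \<in> hcarrier (Luk2 k h) \<and> lex_le a (neg_lex k h a) \<and> hgen (Luk2 k h) {a} = hcarrier (Luk2 k h)"
proof -
  let ?U = "(int k, int h)"
  have "coprime (int k) (int h)" using k by simp
  from exist_pq[OF _ _ _ this] k obtain p q where
    e: "p*int h - q*int k = 1 \<or> p*int h - q*int k = -1" and p0: "0 < p"
    and l2: "2*p < int k \<or> 2*p = int k \<and> 2*q \<le> int h" by auto
  let ?S = "hgen (Gamma_lex ?U) {(p,q)}"
  have pk: "p \<le> int k - 1" using l2 k by auto
  have U0: "lex_le (0,0) ?U" using k by simp
  have a0: "lex_le (0,0) (p,q)" "lex_le (p,q) ?U" using p0 pk k by auto
  have ain: "(p,q) \<in> hcarrier (Luk2 k h)" using a0 by (simp add: Luk2_G G_carrier)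
  have neg: "lex_le (p,q) (neg_lex k h (p,q))" using neg_lex_eq[OF a0] l2 by auto
  have "(p,q) \<in> hcarrier (Gamma_lex ?U)" using ain by (simp add: Luk2_G)
  then have aS: "(p,q) \<in> ?S" by (auto intro: hgen.base)
  have zS: "(0,0) \<in> ?S"
  proof -
    have "ev (Gamma_lex ?U) (p,q) (Tm (Suc k) k) \<in> ?S" by (rule ev_hgen[OF aS])
    moreover have "ev (Gamma_lex ?U) (p,q) (Tm (Suc k) k) = cl ?U (lin (Suc k) k (p,q) ?U)"
      using TmG[OF a0] by simp
    moreover have "(int k + 1) * p \<le> (int k + 1) * (int k - 1)" using pk by (intro mult_left_mono) auto
    then have "lex_le (lin (Suc k) k (p,q) ?U) (0,0)" by (simp add: lin_def sm_def algebra_simps)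
    then have "cl ?U (lin (Suc k) k (p,q) ?U) = (0,0)" using cl_neg U0 by blast
    ultimately show ?thesis by simp
  qed
  have "(0,1) \<in> ?S \<and> (\<exists>z. (1,z) \<in> ?S)"
    using euclid[OF U0 zS, rule_format, of "(p,q)" ?U "nat (p + int k)"] aS S_one[of ?U] p0 k e
    by (simp add: algebra_simps)
  then obtain z where z1: "(0,1) \<in> ?S" "(1,z) \<in> ?S" by blast
  have "hgen (Luk2 k h) {(p,q)} = hcarrier (Luk2 k h)"
  proof
    show "hgen (Luk2 k h) {(p, q)} \<subseteq> hcarrier (Luk2 k h)" unfolding Luk2_G using hgen_G_sub[OF U0] .
    show "hcarrier (Luk2 k h) \<subseteq> hgen (Luk2 k h) {(p, q)}"
      unfolding Luk2_G G_carrier using fill[OF _ zS z1] k by auto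
  qed
  then show ?thesis using ain neg by blast
qed

lemma gen_el_in:
  assumes k: "k \<ge> 2" "1 \<le> h" "h < k" "coprime k h"
  shows "gen_el k h \<in> hcarrier (Luk2 k h)"
proof -
  let ?P = "\<lambda>a. a \<in> hcarrier (Luk2 k h) \<and> lex_le a (neg_lex k h a) \<and> hgen (Luk2 k h) {a} = hcarrier (Luk2 k h)"
  have "\<exists>!a. ?P a" using gen_exists[OF k] gen_unique[OF k] by blast
  then have "?P (THE a. ?P a)" by (rule theI')
  moreover have "gen_el k h = (THE a. ?P a)" using k by (simp add: gen_el_def)
  ultimately show ?thesis by simp
qed




lemma TmG': assumes "lex_le (0,0) y" "lex_le y u" "1 \<le> M" "c < M"
  shows "ev (Gamma_lex u) y (Tm M c) = cl u (lin M c y u)"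
  using TmG[OF assms(1,2), of c "M - 1"] assms(3,4) by simp

lemma exist_alpha:
  fixes a h N :: nat
  assumes a: "a \<ge> 2" and h: "1 \<le> h" "h < a" and cop: "coprime a h"
  shows "\<exists>\<alpha> \<beta>. \<alpha> > N \<and> \<alpha> * h = a * \<beta> + 1"
proof -
  have "gcd (int h) (int a) = 1" using cop by (simp add: coprime_iff_gcd_eq_1 gcd.commute)
  then obtain s t where st: "s * int h + t * int a = 1" using bezout_int[of "int h" "int a"] by auto
  define r where "r = s mod int a"
  define m where "m = s div int a"
  have sr: "s = m * int a + r" unfolding r_def m_def by simp
  have r0: "0 \<le> r" "r < int a" unfolding r_def using a by auto
  define c where "c = - t - m * int h"
  have rc: "r * int h = 1 + int a * c" unfolding c_def using st sr by (simp add: algebra_simps)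
  have "0 \<le> r * int h" using r0 by simp
  then have "int a * c \<ge> -1" using rc by simp
  then have c0: "c \<ge> 0"
  proof -
    assume "int a * c \<ge> -1"
    show "c \<ge> 0"
    proof (rule ccontr)
      assume "\<not> c \<ge> 0" then have "c \<le> -1" by simp
      then have "int a * c \<le> int a * (-1)" using a by (intro mult_left_mono) auto
      then show False using \<open>int a * c \<ge> -1\<close> a by simp
    qed
  qed
  define \<alpha> where "\<alpha> = nat r + a * (N + 1)"
  define \<beta> where "\<beta> = nat c + h * (N + 1)"
  have "int \<alpha> * int h = int a * int \<beta> + 1"
    unfolding \<alpha>_def \<beta>_def using r0 c0 rc by (simp add: algebra_simps)
  then have "\<alpha> * h = a * \<beta> + 1" by (metis of_nat_eq_iff of_nat_mult of_nat_add of_nat_1)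
  moreover have "\<alpha> > N"
  proof -
    have "1 * (N + 1) \<le> a * (N + 1)" using a by (intro mult_le_mono1) simp
    then have "N + 1 \<le> a * (N + 1)" by simp
    then show ?thesis unfolding \<alpha>_def by linarith
  qed
  ultimately show ?thesis by blast
qed

definition alph :: "nat \<Rightarrow> nat \<Rightarrow> nat \<Rightarrow> nat" where
  "alph a N h = (SOME \<alpha>. \<exists>\<beta>. \<alpha> > N \<and> \<alpha> * h = a * \<beta> + 1)"
definition bet :: "nat \<Rightarrow> nat \<Rightarrow> nat \<Rightarrow> nat" where
  "bet a N h = (alph a N h * h - 1) div a"

lemma alph_props:
  assumes a: "a \<ge> 2" and h: "1 \<le> h" "h < a" and cop: "coprime a h"
  shows "alph a N h > N" "alph a N h * h = a * bet a N h + 1" "bet a N h < alph a N h"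
proof -
  have ex: "\<exists>\<alpha> \<beta>. \<alpha> > N \<and> \<alpha> * h = a * \<beta> + 1" by (rule exist_alpha[OF assms])
  then have "\<exists>\<beta>. alph a N h > N \<and> alph a N h * h = a * \<beta> + 1" unfolding alph_def by (rule someI_ex)
  then obtain \<beta> where b: "alph a N h > N" "alph a N h * h = a * \<beta> + 1" by blast
  then have "bet a N h = \<beta>" unfolding bet_def using a by simp
  then show "alph a N h > N" "alph a N h * h = a * bet a N h + 1" using b by auto
  have "a * bet a N h < alph a N h * h" using b \<open>bet a N h = \<beta>\<close> by simp
  also have "\<dots> \<le> alph a N h * a" using h by simp
  finally show "bet a N h < alph a N h" using a by (simp add: mult.commute)
qed




lemma cl_in: "lex_le (0,0) u \<Longrightarrow> lex_le (0,0) (cl u v) \<and> lex_le (cl u v) u"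
  by (cases v; cases u) (auto simp: cl_def lex_max_def lex_min_def)

lemma gi_zero_top: "lex_le (0,0) q \<Longrightarrow> gi u (0,0) q = u"
  unfolding gi_def by (rule min_r) (cases q; cases u; auto)
lemma gi_top_top: "lex_le p u \<Longrightarrow> gi u p u = u"
  unfolding gi_def by (rule min_r) (cases p; cases u; auto)

lemma PQ_top:
  fixes K1 K2 y1 y2 :: int and \<alpha> \<beta> a h s :: nat
  assumes K: "K1 \<ge> 1" and y: "lex_le (0,0) (y1,y2)" "lex_le (y1,y2) (K1,K2)"
    and ab: "\<alpha> * h = a * \<beta> + 1" and al: "int \<alpha> > K1" and sK: "int s > K1" and a0: "a > 0"
    and ne: "y1 * int a \<noteq> int h * K1"
  shows "gi (K1,K2) (cl (K1,K2) (lin \<alpha> \<beta> (y1,y2) (K1,K2))) (cl (K1,K2) (lin (a*s) (h*s) (y1,y2) (K1,K2))) = (K1,K2)"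
proof -
  let ?U = "(K1,K2)"
  have U0: "lex_le (0,0) ?U" using K by simp
  have abi: "int \<alpha> * int h = int a * int \<beta> + 1" using ab by (metis of_nat_mult of_nat_add of_nat_1)
  define D where "D = y1 * int a - int h * K1"
  show ?thesis
  proof (cases "D < 0")
    case True
    have "int a * (int \<alpha> * y1 - int \<beta> * K1) = int \<alpha> * D + K1"
      unfolding D_def using abi by (simp add: algebra_simps)
    moreover have "int \<alpha> * D \<le> int \<alpha> * (-1)" using True by (intro mult_left_mono) auto
    ultimately have "int a * (int \<alpha> * y1 - int \<beta> * K1) < 0" using al by simp
    then have "int \<alpha> * y1 - int \<beta> * K1 < 0" using a0 by (simp add: mult_less_0_iff)
    then have "lex_le (lin \<alpha> \<beta> (y1,y2) ?U) (0,0)" by (simp add: lin_def sm_def)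
    then have "cl ?U (lin \<alpha> \<beta> (y1,y2) ?U) = (0,0)" using cl_neg U0 by blast
    then show ?thesis using gi_zero_top cl_in[OF U0] by simp
  next
    case False
    then have D1: "D \<ge> 1" using ne unfolding D_def by simp
    have "int (a*s) * y1 - int (h*s) * K1 = int s * D" unfolding D_def by (simp add: algebra_simps)
    moreover have "int s * D \<ge> int s * 1" using D1 by (intro mult_left_mono) auto
    ultimately have "int (a*s) * y1 - int (h*s) * K1 > K1" using sK by simp
    then have "lex_le ?U (lin (a*s) (h*s) (y1,y2) ?U)" by (simp add: lin_def sm_def)
    then have "cl ?U (lin (a*s) (h*s) (y1,y2) ?U) = ?U" using cl_big U0 by blast
    then show ?thesis using gi_top_top cl_in[OF U0] by simp
  qed
qed

lemma PQ_special:
  fixes \<alpha> \<beta> a h s :: nat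
  assumes ab: "\<alpha> * h = a * \<beta> + 1" and a: "a \<ge> 1"
  shows "gi (int a, 0) (cl (int a, 0) (lin \<alpha> \<beta> (int h, 0) (int a, 0))) (cl (int a,0) (lin (a*s) (h*s) (int h,0) (int a,0))) = (int a - 1, 0)"
proof -
  have abi: "int \<alpha> * int h = int a * int \<beta> + 1" using ab by (metis of_nat_mult of_nat_add of_nat_1)
  have U0: "lex_le (0,0) (int a, 0)" using a by simp
  have "lin \<alpha> \<beta> (int h, 0) (int a, 0) = (1,0)" using abi by (simp add: lin_def sm_def algebra_simps)
  moreover have "cl (int a, 0) (1,0) = (1,0)" using a by (intro cl_mid) auto
  moreover have "lin (a*s) (h*s) (int h,0) (int a,0) = (0,0)" by (simp add: lin_def sm_def algebra_simps)
  moreover have "cl (int a, 0) (0,0) = (0,0)" using U0 by (intro cl_neg) auto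
  moreover have "gi (int a, 0) (1,0) (0,0) = (int a - 1, 0)" by (simp add: gi_def lex_min_def)
  ultimately show ?thesis by simp
qed




definition hs :: "nat \<Rightarrow> nat list" where "hs a = filter (coprime a) [1..<a]"
definition fh :: "nat \<Rightarrow> nat \<Rightarrow> nat \<Rightarrow> tm" where
  "fh a N h = Im (Tm (alph a N h) (bet a N h)) (Tm (a*(N+1)) (h*(N+1)))"
fun prodT :: "tm list \<Rightarrow> tm" where
  "prodT [] = V"
| "prodT (t # ts) = (if ts = [] then t else Mu t (prodT ts))"
definition bterm :: "nat \<Rightarrow> nat \<Rightarrow> tm" where
  "bterm a N = (if a = 1 then Tm 2 0 else prodT (map (fh a N) (hs a)))"

lemma hs_props: "h \<in> set (hs a) \<Longrightarrow> 1 \<le> h \<and> h < a \<and> coprime a h"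
  by (auto simp: hs_def)
lemma hs_1: "a \<ge> 2 \<Longrightarrow> 1 \<in> set (hs a)" by (auto simp: hs_def)
lemma hs_distinct: "distinct (hs a)" by (simp add: hs_def)

lemma fh_eval:
  assumes a: "a \<ge> 2" and h: "h \<in> set (hs a)" and y: "lex_le (0,0) y" "lex_le y u"
  shows "ev (Gamma_lex u) y (fh a N h) =
    gi u (cl u (lin (alph a N h) (bet a N h) y u)) (cl u (lin (a*(N+1)) (h*(N+1)) y u))"
proof -
  have hp: "1 \<le> h" "h < a" "coprime a h" using hs_props[OF h] by auto
  note ap = alph_props[OF a hp, of N]
  have "ev (Gamma_lex u) y (Tm (alph a N h) (bet a N h)) = cl u (lin (alph a N h) (bet a N h) y u)"
    using ap by (intro TmG'[OF y]) auto
  moreover have "h*(N+1) < a*(N+1)" using hp by (intro mult_less_mono1) auto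
  then have "ev (Gamma_lex u) y (Tm (a*(N+1)) (h*(N+1))) = cl u (lin (a*(N+1)) (h*(N+1)) y u)"
    using a by (intro TmG'[OF y]) auto
  ultimately show ?thesis by (simp add: fh_def)
qed

lemma gm_U_l: "lex_le (0,0) w \<Longrightarrow> gm u u w = w"
  unfolding gm_def by (cases w; cases u) (auto simp add: lex_max_def)
lemma gm_U_r: "lex_le (0,0) w \<Longrightarrow> gm u w u = w"
  unfolding gm_def by (cases w; cases u) (auto simp add: lex_max_def)

lemma prod_allU:
  assumes "ts \<noteq> []" "\<forall>t\<in>set ts. ev (Gamma_lex u) y t = u" "lex_le (0,0) u"
  shows "ev (Gamma_lex u) y (prodT ts) = u"
  using assms
proof (induction ts)
  case Nil then show ?case by simp
next
  case (Cons t ts)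
  then show ?case by (cases "ts = []") (auto simp: gm_U_l)
qed

lemma prod_one:
  assumes "distinct xs" "h0 \<in> set xs" "\<forall>h\<in>set xs. h \<noteq> h0 \<longrightarrow> ev (Gamma_lex u) y (f h) = u"
    "ev (Gamma_lex u) y (f h0) = w" "lex_le (0,0) w" "lex_le (0,0) u"
  shows "ev (Gamma_lex u) y (prodT (map f xs)) = w"
  using assms
proof (induction xs)
  case Nil then show ?case by simp
next
  case (Cons h xs)
  show ?case
  proof (cases "h = h0")
    case True
    then have "h0 \<notin> set xs" using Cons.prems by simp
    show ?thesis
    proof (cases "xs = []")
      case False
      have "ev (Gamma_lex u) y (prodT (map f xs)) = u"
        using False Cons.prems \<open>h0 \<notin> set xs\<close> by (intro prod_allU) auto
      then show ?thesis using True False Cons.prems by (simp add: gm_U_r)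
    qed (use True Cons.prems in simp)
  next
    case False
    then have xs: "xs \<noteq> []" "h0 \<in> set xs" using Cons.prems by auto
    have "ev (Gamma_lex u) y (prodT (map f xs)) = w" using Cons.IH Cons.prems xs by simp
    then show ?thesis using False xs Cons.prems by (simp add: gm_U_l)
  qed
qed

lemma KeyTop:
  fixes K1 K2 :: int
  assumes a: "a \<ge> 2" and K: "1 \<le> K1" "K1 \<le> int N" and y: "lex_le (0,0) y" "lex_le y (K1,K2)"
    and ne: "\<forall>h\<in>set (hs a). fst y * int a \<noteq> int h * K1"
  shows "ev (Gamma_lex (K1,K2)) y (bterm a N) = (K1,K2)"
proof -
  have "ev (Gamma_lex (K1,K2)) y (fh a N h) = (K1,K2)" if h: "h \<in> set (hs a)" for h
  proof -
    have hp: "1 \<le> h" "h < a" "coprime a h" using hs_props[OF h] by auto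
    note ap = alph_props[OF a hp, of N]
    obtain y1 y2 where yy: "y = (y1,y2)" by (cases y)
    have "ev (Gamma_lex (K1,K2)) y (fh a N h) = gi (K1,K2) (cl (K1,K2) (lin (alph a N h) (bet a N h) y (K1,K2)))
       (cl (K1,K2) (lin (a*(N+1)) (h*(N+1)) y (K1,K2)))" by (rule fh_eval[OF a h y])
    also have "\<dots> = (K1,K2)" unfolding yy
    proof (rule PQ_top)
      show "int (alph a N h) > K1" using ap(1) K by linarith
      show "int (N+1) > K1" using K by simp
      show "y1 * int a \<noteq> int h * K1" using ne h yy by auto
    qed (use K y yy ap a in auto)
    finally show ?thesis .
  qed
  moreover have "hs a \<noteq> []" using hs_1[OF a] by auto
  ultimately show ?thesis using a K by (auto simp: bterm_def intro!: prod_allU)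
qed

lemma KeySpecial:
  assumes a: "a \<ge> 2" and aN: "a \<le> N" and h0: "h0 \<in> set (hs a)"
  shows "ev (Gamma_lex (int a, 0)) (int h0, 0) (bterm a N) = (int a - 1, 0)"
proof -
  have h0p: "1 \<le> h0" "h0 < a" "coprime a h0" using hs_props[OF h0] by auto
  have y: "lex_le (0,0) (int h0, 0)" "lex_le (int h0, 0) (int a, 0)" using h0p by auto
  have top: "ev (Gamma_lex (int a, 0)) (int h0, 0) (fh a N h) = (int a, 0)"
    if h: "h \<in> set (hs a)" "h \<noteq> h0" for h
  proof -
    have hp: "1 \<le> h" "h < a" "coprime a h" using hs_props[OF h(1)] by auto
    note ap = alph_props[OF a hp, of N]
    have "int h0 * int a \<noteq> int h * int a" using h a by simp
    note ne = this
    have "ev (Gamma_lex (int a, 0)) (int h0, 0) (fh a N h) = gi (int a, 0) (cl (int a, 0) (lin (alph a N h) (bet a N h) (int h0, 0) (int a, 0)))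
       (cl (int a, 0) (lin (a*(N+1)) (h*(N+1)) (int h0, 0) (int a, 0)))" by (rule fh_eval[OF a h(1) y])
    also have "\<dots> = (int a, 0)"
    proof (rule PQ_top)
      show "int (alph a N h) > int a" using ap(1) aN by linarith
      show "int (N+1) > int a" using aN by simp
    qed (use ne y ap a in auto)
    finally show ?thesis .
  qed
  have sp: "ev (Gamma_lex (int a, 0)) (int h0, 0) (fh a N h0) = (int a - 1, 0)"
    unfolding fh_eval[OF a h0 y] using alph_props[OF a h0p, of N] a
    by (intro PQ_special) auto
  show ?thesis unfolding bterm_def using a
    by (simp, intro prod_one[OF hs_distinct h0]) (use top sp a in auto)
qed




lemma ev_prod:
  assumes "\<And>d. d \<notin> D \<Longrightarrow> g d = (0,0)"
  shows "ev (prod_alg D) g t d = (if d \<in> D then ev (comp_alg d) (g d) t else (0,0))"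
  by (induction t) (simp_all add: prod_alg_def assms)

lemma Luk_carrier: "hcarrier (Luk k) = {(m,0) | m. 0 \<le> m \<and> m \<le> int k}"
  by (simp add: Luk_def)

lemma ev_Luk:
  assumes "y \<in> hcarrier (Luk k)"
  shows "ev (Luk k) y t \<in> hcarrier (Luk k) \<and> ev (Luk k) y t = ev (Gamma_lex (int k, 0)) y t"
proof (induction t)
  case V then show ?case using assms by simp
next
  case (Mu s t)
  have "ev (Luk k) y s \<in> hcarrier (Luk k)" "ev (Luk k) y t \<in> hcarrier (Luk k)" using Mu by auto
  then obtain m m' where "ev (Luk k) y s = (m,0)" "ev (Luk k) y t = (m',0)" "0 \<le> m" "m \<le> int k" "0 \<le> m'" "m' \<le> int k"
    unfolding Luk_carrier by blast
  note mm = this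
  have g: "ev (Gamma_lex (int k, 0)) y s = (m,0)" "ev (Gamma_lex (int k, 0)) y t = (m',0)" using mm Mu by auto
  have l: "ev (Luk k) y (Mu s t) = (max (m + m' - int k) 0, 0)" using mm by (simp add: Luk_def)
  have r: "ev (Gamma_lex (int k, 0)) y (Mu s t) = (max (m + m' - int k) 0, 0)" using g
    by (simp add: gm_def lex_max_def)
  show ?case using l r mm by (simp add: Luk_carrier)
next
  case (Im s t)
  have "ev (Luk k) y s \<in> hcarrier (Luk k)" "ev (Luk k) y t \<in> hcarrier (Luk k)" using Im by auto
  then obtain m m' where "ev (Luk k) y s = (m,0)" "ev (Luk k) y t = (m',0)" "0 \<le> m" "m \<le> int k" "0 \<le> m'" "m' \<le> int k"
    unfolding Luk_carrier by blast
  note mm = this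
  have g: "ev (Gamma_lex (int k, 0)) y s = (m,0)" "ev (Gamma_lex (int k, 0)) y t = (m',0)" using mm Im by auto
  have l: "ev (Luk k) y (Im s t) = (min (int k - m + m') (int k), 0)" using mm by (simp add: Luk_def)
  have r: "ev (Gamma_lex (int k, 0)) y (Im s t) = (min (int k - m + m') (int k), 0)" using g
    by (simp add: gi_def lex_min_def)
  show ?case using l r mm by (simp add: Luk_carrier)
qed

lemma Com_carrier: "hcarrier Comega = {(z,0) | z. z \<le> 0}"
  by (simp add: Comega_def)

lemma ev_Com:
  assumes "y \<in> hcarrier Comega"
  shows "ev Comega y t \<in> hcarrier Comega \<and> (1, fst (ev Comega y t)) = ev (Gamma_lex (1,0)) (1, fst y) t"
proof (induction t)
  case V then show ?case using assms by simp
next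
  case (Mu s t)
  have "ev Comega y s \<in> hcarrier Comega" "ev Comega y t \<in> hcarrier Comega" using Mu by auto
  then obtain m m' where "ev Comega y s = (m,0)" "ev Comega y t = (m',0)" "m \<le> 0" "m' \<le> 0"
    unfolding Com_carrier by blast
  note mm = this
  have g: "ev (Gamma_lex (1,0)) (1, fst y) s = (1,m)" "ev (Gamma_lex (1,0)) (1, fst y) t = (1,m')" using mm Mu by auto
  have l: "ev Comega y (Mu s t) = (m + m', 0)" using mm by (simp add: Comega_def)
  have r: "ev (Gamma_lex (1,0)) (1, fst y) (Mu s t) = (1, m + m')" using g mm
    by (simp add: gm_def lex_max_def)
  show ?case using l r mm by (simp add: Com_carrier)
next
  case (Im s t)
  have "ev Comega y s \<in> hcarrier Comega" "ev Comega y t \<in> hcarrier Comega" using Im by auto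
  then obtain m m' where "ev Comega y s = (m,0)" "ev Comega y t = (m',0)" "m \<le> 0" "m' \<le> 0"
    unfolding Com_carrier by blast
  note mm = this
  have g: "ev (Gamma_lex (1,0)) (1, fst y) s = (1,m)" "ev (Gamma_lex (1,0)) (1, fst y) t = (1,m')" using mm Im by auto
  have l: "ev Comega y (Im s t) = (min (m' - m) 0, 0)" using mm by (simp add: Comega_def)
  have r: "ev (Gamma_lex (1,0)) (1, fst y) (Im s t) = (1, min (m' - m) 0)" using g mm
    by (simp add: gi_def lex_min_def)
  show ?case using l r mm by (simp add: Com_carrier)
qed

lemma hone_idem:
  "hmult (comp_alg d) (hone (comp_alg d)) (hone (comp_alg d)) = hone (comp_alg d) \<and>
   himp (comp_alg d) (hone (comp_alg d)) (hone (comp_alg d)) = hone (comp_alg d)"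
  by (cases d) (auto simp: comp_alg_def Luk2_def Gamma_lex_def Luk_def Comega_def lex_max_def lex_min_def)




lemma gen_in: assumes "k \<ge> 1" "h < k" "coprime k h" shows "gen_el k h \<in> hcarrier (Luk2 k h)"
proof (cases "k = 1")
  case True
  then have "h = 0" using assms by simp
  then show ?thesis using True by (simp add: gen_el_def Luk2_G G_carrier)
next
  case False
  then have k2: "k \<ge> 2" using assms by simp
  have "h \<noteq> 0"
  proof
    assume "h = 0"
    then have "coprime k 0" using assms by simp
    then show False using False by simp
  qed
  then show ?thesis using gen_el_in[OF k2] assms by simp
qed

lemma neg_in: assumes "x \<in> hcarrier (Luk2 k h)" shows "neg_lex k h x \<in> hcarrier (Luk2 k h)"
proof -
  have x: "lex_le (0,0) x" "lex_le x (int k, int h)" using assms by (auto simp: Luk2_G G_carrier)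
  show ?thesis using neg_lex_eq[OF x] x by (cases x) (auto simp: Luk2_G G_carrier)
qed

lemma Delta_cases:
  assumes "d \<in> Delta I J K"
  obtains (T2) k h where "d = (k,h,2)" "k \<in> divdown I" "h < k" "coprime k h"
  | (TJ) k h i where "d = (k,h,i)" "i = 0 \<or> i = 1" "k \<in> divdown J" "h < k" "coprime k h"
  | (TC) "d = (0,0,3)" "Omega \<in> K"
  using assms unfolding Delta_def by (auto split: if_splits)

lemma divdown_pos: assumes "k \<in> divdown X" "0 \<notin> X" "finite X"
  shows "1 \<le> k" "k \<le> Max X" "\<exists>m\<in>X. k dvd m"
proof -
  obtain m where m: "m \<in> X" "k dvd m" using assms(1) by (auto simp: divdown_def)
  then have "m > 0" using assms(2) by (cases m) auto
  then show "1 \<le> k" "k \<le> Max X" using m assms(3)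
    by (auto dest: dvd_imp_le intro: Max_ge le_trans Nat.gr0I simp: dvd_pos_nat)
  show "\<exists>m\<in>X. k dvd m" using m by blast
qed

lemma gbar_in: assumes "d \<in> Delta I J K" "reduced I J K"
  shows "gbar (Delta I J K) d \<in> hcarrier (comp_alg d)"
  using assms(1)
proof (cases rule: Delta_cases)
  case (T2 k h)
  then show ?thesis using assms by (simp add: gbar_def comp_alg_def Luk_def)
next
  case (TJ k h i)
  have "1 \<le> k" using divdown_pos(1)[OF TJ(3)] assms(2) by (auto simp: reduced_def)
  then have g: "gen_el k h \<in> hcarrier (Luk2 k h)" using gen_in TJ by blast
  show ?thesis using TJ(2)
  proof
    assume "i = 0" then show ?thesis using TJ assms g by (simp add: gbar_def comp_alg_def)
  next
    assume "i = 1" then show ?thesis using TJ assms neg_in[OF g] by (simp add: gbar_def comp_alg_def)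
  qed
next
  case TC
  then show ?thesis using assms by (simp add: gbar_def comp_alg_def Comega_def)
qed




definition Da :: "nat \<Rightarrow> (nat \<times> nat \<times> nat) set" where
  "Da a = {(a,h,2) | h. h < a \<and> coprime a h}"

lemma dvd_trans_contra:
  fixes a h' k :: nat
  assumes "int (y1::nat) * int a = int h' * int k" "coprime a h'"
  shows "a dvd k"
proof -
  have "y1 * a = h' * k" using assms(1) by (metis of_nat_eq_iff of_nat_mult)
  then have "a dvd k * h'" by (metis dvd_triv_right mult.commute)
  then show ?thesis using coprime_dvd_mult_left_iff[OF assms(2)] by blast
qed

lemma comp_val:
  assumes red: "reduced I J K" and aI: "a \<in> I" and d: "d \<in> Delta I J K"
  shows "ev (comp_alg d) (gbar (Delta I J K) d) (bterm a (Max (I \<union> J))) =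
     (if d \<in> Da a then (int a - 1, 0) else hone (comp_alg d))"
proof -
  define N where "N = Max (I \<union> J)"
  have fin: "finite (I \<union> J)" using red by (simp add: reduced_def)
  have nz: "0 \<notin> I" "0 \<notin> J" using red by (auto simp: reduced_def)
  have aN: "a \<le> N" unfolding N_def using fin aI by (intro Max_ge) auto
  have a1: "a \<ge> 1" using aI nz by (cases a) auto
  have R1: "\<not> a dvd m" if "m \<in> I" "m \<noteq> a" for m using red aI that by (auto simp: reduced_def)
  have R2: "\<not> a dvd m" if "m \<in> J" for m using red aI that by (auto simp: reduced_def)
  have bnd: "1 \<le> k \<and> k \<le> N" if "k dvd m" "m \<in> I \<union> J" for k m
  proof -
    have "m > 0" using nz that by (cases m) auto
    then have "k \<le> m" "1 \<le> k" using that(1) by (auto simp: dvd_imp_le dvd_pos_nat Suc_leI)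
    moreover have "m \<le> N" unfolding N_def using fin that(2) by (intro Max_ge) auto
    ultimately show ?thesis by simp
  qed
  have a1J: "a = 1 \<Longrightarrow> J = {} \<and> I \<subseteq> {1}" using R1 R2 by auto
  have hsI: "h \<in> set (hs a)" if "h < a" "coprime a h" "a \<ge> 2" for h
  proof -
    have "h \<noteq> 0"
    proof
      assume "h = 0"
      then have "coprime a 0" using that by simp
      then show False using that(3) by simp
    qed
    then show ?thesis using that by (auto simp: hs_def)
  qed
  have main: "ev (comp_alg d) (gbar (Delta I J K) d) (bterm a N) = (if d \<in> Da a then (int a - 1, 0) else hone (comp_alg d))"
    using d
  proof (cases rule: Delta_cases)
    case (T2 k h)
    obtain m where m: "m \<in> I" "k dvd m" using T2(2) by (auto simp: divdown_def)
    have kb: "1 \<le> k" "k \<le> N" using bnd[OF m(2)] m(1) by auto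
    have gy: "gbar (Delta I J K) d = (int h, 0)" "comp_alg d = Luk k" using T2 d by (auto simp: gbar_def comp_alg_def)
    have yc: "(int h, 0) \<in> hcarrier (Luk k)" using T2 by (simp add: Luk_def)
    have ev: "ev (Luk k) (int h, 0) (bterm a N) = ev (Gamma_lex (int k, 0)) (int h, 0) (bterm a N)"
      using ev_Luk[OF yc] by blast
    have y: "lex_le (0,0) (int h, 0)" "lex_le (int h, 0) (int k, 0)" using T2 by auto
    show ?thesis
    proof (cases "d \<in> Da a")
      case True
      then have ka: "k = a" "h < a" "coprime a h" using T2 by (auto simp: Da_def)
      show ?thesis
      proof (cases "a = 1")
        case True
        then have "h = 0" using ka by simp
        have "ev (Gamma_lex (int k, 0)) (int h, 0) (bterm a N) = cl (int k, 0) (lin 2 0 (int h, 0) (int k, 0))"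
          using True by (simp add: bterm_def TmG'[OF y])
        also have "\<dots> = (0,0)" using \<open>h = 0\<close> ka True by (simp add: lin_def sm_def cl_def lex_max_def lex_min_def)
        finally show ?thesis using gy ev \<open>d \<in> Da a\<close> True by simp
      next
        case False
        then have a2: "a \<ge> 2" using a1 by simp
        have "ev (Gamma_lex (int a, 0)) (int h, 0) (bterm a N) = (int a - 1, 0)"
          using KeySpecial[OF a2 aN hsI[OF ka(2,3) a2]] .
        then show ?thesis using gy ev \<open>d \<in> Da a\<close> ka by simp
      qed
    next
      case False
      then have kna: "k \<noteq> a" using T2 by (auto simp: Da_def)
      have a2: "a \<ge> 2"
      proof (rule ccontr)
        assume "\<not> a \<ge> 2" then have "a = 1" using a1 by simp
        then have "m = 1" using a1J m by auto
        then show False using m kna \<open>a = 1\<close> by simp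
      qed
      have ne: "\<forall>h'\<in>set (hs a). fst (int h, 0::int) * int a \<noteq> int h' * int k"
      proof (intro ballI notI)
        fix h' assume h': "h' \<in> set (hs a)" and eq: "fst (int h, 0::int) * int a = int h' * int k"
        have "a dvd k" using dvd_trans_contra[of h a h' k] eq hs_props[OF h'] by simp
        then have "a dvd m" using m dvd_trans by blast
        then have "m = a" using R1 m by blast
        then have "k dvd a" using m by simp
        then show False using \<open>a dvd k\<close> kna dvd_antisym by blast
      qed
      have "ev (Gamma_lex (int k, 0)) (int h, 0) (bterm a N) = (int k, 0)"
        using KeyTop[OF a2 _ _ y ne] kb by simp
      then show ?thesis using gy ev False by (simp add: Luk_def)
    qed
  next
    case (TJ k h i)
    obtain m where m: "m \<in> J" "k dvd m" using TJ(3) by (auto simp: divdown_def)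
    have kb: "1 \<le> k" "k \<le> N" using bnd[OF m(2)] m(1) by auto
    have a2: "a \<ge> 2" using a1J m a1 by (cases "a = 1") auto
    have cd: "comp_alg d = Gamma_lex (int k, int h)" using TJ by (auto simp: comp_alg_def Luk2_G)
    have yc: "gbar (Delta I J K) d \<in> hcarrier (Gamma_lex (int k, int h))"
      using gbar_in[OF d red] cd by simp
    obtain y1 y2 where yy: "gbar (Delta I J K) d = (y1,y2)" by (cases "gbar (Delta I J K) d")
    have y: "lex_le (0,0) (y1,y2)" "lex_le (y1,y2) (int k, int h)" using yc yy by (auto simp: G_carrier)
    have ne: "\<forall>h'\<in>set (hs a). fst (y1,y2) * int a \<noteq> int h' * int k"
    proof (intro ballI notI)
      fix h' assume h': "h' \<in> set (hs a)" and eq: "fst (y1,y2) * int a = int h' * int k"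
      have "y1 \<ge> 0" using y by auto
      then have "int (nat y1) * int a = int h' * int k" using eq by simp
      then have "a dvd k" using dvd_trans_contra[of "nat y1" a h' k] hs_props[OF h'] by simp
      then have "a dvd m" using m dvd_trans by blast
      then show False using R2 m by blast
    qed
    have "ev (Gamma_lex (int k, int h)) (y1,y2) (bterm a N) = (int k, int h)"
      using KeyTop[OF a2 _ _ y ne] kb by simp
    moreover have "d \<notin> Da a" using TJ by (auto simp: Da_def)
    ultimately show ?thesis using cd yy by simp
  next
    case TC
    have cd: "comp_alg d = Comega" "gbar (Delta I J K) d = (-1,0)" using TC d by (auto simp: comp_alg_def gbar_def)
    have yc: "(-1::int, 0::int) \<in> hcarrier Comega" by (simp add: Comega_def)
    note E = ev_Com[OF yc, of "bterm a N"]
    have y: "lex_le (0,0) (1::int,-1::int)" "lex_le (1::int,-1::int) (1,0)" by auto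
    have val: "ev (Gamma_lex (1,0)) (1,-1) (bterm a N) = (1,0)"
    proof (cases "a = 1")
      case True
      then show ?thesis by (simp add: bterm_def TmG'[OF y] lin_def sm_def cl_def lex_max_def lex_min_def)
    next
      case False
      then have a2: "a \<ge> 2" using a1 by simp
      have ne: "\<forall>h'\<in>set (hs a). fst (1::int,-1::int) * int a \<noteq> int h' * 1"
        using hs_props by fastforce
      show ?thesis using KeyTop[OF a2 _ _ y] ne a1 aN by simp
    qed
    then have "fst (ev Comega (-1, 0) (bterm a N)) = 0" using E by simp
    moreover have "ev Comega (-1, 0) (bterm a N) \<in> hcarrier Comega" using E by blast
    ultimately have "ev Comega (-1, 0) (bterm a N) = (0,0)" by (auto simp: Comega_def)
    moreover have "d \<notin> Da a" using TC by (auto simp: Da_def)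
    ultimately show ?thesis using cd by (simp add: Comega_def)
  qed
  then show ?thesis by (simp add: N_def)
qed




lemma B_Delta_simps:
  "hcarrier (B_Delta I J K) = hgen (prod_alg (Delta I J K)) {gbar (Delta I J K)}"
  "hmult (B_Delta I J K) = hmult (prod_alg (Delta I J K))"
  "himp (B_Delta I J K) = himp (prod_alg (Delta I J K))"
  "hone (B_Delta I J K) = hone (prod_alg (Delta I J K))"
  by (simp_all add: B_Delta_def subalg_gen_def)

theorem theorem3p10:
  fixes I J :: "nat set" and K :: "omega set" and a :: nat
  assumes "reduced I J K" and "a \<in> I"
  shows "hoop_embeddable (Luk a) (B_Delta I J K)"
proof -
  note red = assms(1) and aI = assms(2)
  define D where "D = Delta I J K"
  define g where "g = gbar D"
  define P where "P = prod_alg D"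
  define S where "S = hgen P {g}"
  define N where "N = Max (I \<union> J)"
  have a1: "a \<ge> 1" using aI red by (cases a) (auto simp: reduced_def)
  have g0: "\<And>d. d \<notin> D \<Longrightarrow> g d = (0,0)" by (simp add: g_def gbar_def)
  have gP: "g \<in> hcarrier P" using gbar_in[OF _ red] g0 by (auto simp: P_def prod_alg_def g_def D_def)
  have gS: "g \<in> S" unfolding S_def using gP by (auto intro: hgen.base)
  define F where "F m = (\<lambda>d. if d \<in> D then (if d \<in> Da a then (int m, 0) else hone (comp_alg d)) else (0,0))" for m :: nat
  have DaD: "Da a \<subseteq> D"
  proof
    fix d assume "d \<in> Da a"
    then obtain h where dh: "d = (a,h,2)" "h < a" "coprime a h" by (auto simp: Da_def)
    moreover have "a \<in> divdown I" unfolding divdown_def using aI dvd_refl by blast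
    ultimately show "d \<in> D" unfolding D_def Delta_def by blast
  qed
  have compDa: "comp_alg d = Luk a" if "d \<in> Da a" for d using that by (auto simp: Da_def comp_alg_def)
  have bF: "ev P g (bterm a N) = F (a - 1)"
  proof
    fix d
    have e: "ev P g (bterm a N) d = (if d \<in> D then ev (comp_alg d) (g d) (bterm a N) else (0,0))"
      unfolding P_def by (rule ev_prod[OF g0])
    show "ev P g (bterm a N) d = F (a - 1) d"
      using e comp_val[OF red aI, of d] a1 DaD unfolding F_def N_def g_def D_def by auto
  qed
  have bS: "F (a - 1) \<in> S" using ev_hgen[OF gS[unfolded S_def]] bF unfolding S_def by metis
  have Fa: "F a = hone P"
  proof
    fix d show "F a d = hone P d" using compDa by (auto simp: F_def P_def prod_alg_def Luk_def)
  qed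
  have step: "hmult P (F (a - 1)) (F m) = F (m - 1)" if "1 \<le> m" "m \<le> a" for m
  proof
    fix d show "hmult P (F (a - 1)) (F m) d = F (m - 1) d"
      using compDa hone_idem[of d] that a1 by (auto simp: F_def P_def prod_alg_def Luk_def of_nat_diff)
  qed
  have allS: "F (a - j) \<in> S" if "j \<le> a" for j
    using that
  proof (induction j)
    case 0 then show ?case using Fa hgen.one[of P "{g}"] by (simp add: S_def)
  next
    case (Suc j)
    have "hmult P (F (a - 1)) (F (a - j)) \<in> S" using Suc bS unfolding S_def by (auto intro: hgen.mult)
    moreover have "hmult P (F (a - 1)) (F (a - j)) = F (a - Suc j)" using step[of "a - j"] Suc.prems by simp
    ultimately show ?case by simp
  qed
  define f where "f v = F (nat (fst v))" for v :: "int \<times> int"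
  define h0 where "h0 = (if a = 1 then 0 else (1::nat))"
  have d0: "(a, h0, 2) \<in> Da a" using a1 by (auto simp: Da_def h0_def)
  have d0D: "(a, h0, 2) \<in> D" using d0 DaD by blast
  have carr: "hcarrier (Luk a) = {(m,0) | m. 0 \<le> m \<and> m \<le> int a}" by (simp add: Luk_def)
  show ?thesis
    unfolding hoop_embeddable_def B_Delta_simps
  proof (intro exI[of _ f] conjI ballI)
    show "inj_on f (hcarrier (Luk a))"
    proof (rule inj_onI)
      fix v w assume v: "v \<in> hcarrier (Luk a)" and w: "w \<in> hcarrier (Luk a)" and e: "f v = f w"
      have "f v (a, h0, 2) = f w (a, h0, 2)" using e by simp
      then show "v = w" using v w d0 d0D unfolding carr by (auto simp: f_def F_def)
    qed
    show "f ` hcarrier (Luk a) \<subseteq> hgen (prod_alg (Delta I J K)) {gbar (Delta I J K)}"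
    proof
      fix x assume "x \<in> f ` hcarrier (Luk a)"
      then obtain m where m: "0 \<le> m" "m \<le> int a" "x = F (nat m)" unfolding carr f_def by auto
      have "F (a - (a - nat m)) \<in> S" using allS by simp
      then show "x \<in> hgen (prod_alg (Delta I J K)) {gbar (Delta I J K)}"
        using m unfolding S_def P_def g_def D_def by simp
    qed
    show "f (hone (Luk a)) = hone (prod_alg (Delta I J K))"
      using Fa by (simp add: f_def Luk_def P_def D_def)
    fix v w assume v: "v \<in> hcarrier (Luk a)" and w: "w \<in> hcarrier (Luk a)"
    obtain m m' where mm: "v = (m,0)" "w = (m',0)" "0 \<le> m" "m \<le> int a" "0 \<le> m'" "m' \<le> int a"
      using v w unfolding carr by auto
    show "f (hmult (Luk a) v w) = hmult (prod_alg (Delta I J K)) (f v) (f w)"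
    proof
      fix d show "f (hmult (Luk a) v w) d = hmult (prod_alg (Delta I J K)) (f v) (f w) d"
        using compDa hone_idem[of d] mm unfolding D_def[symmetric]
        by (auto simp: f_def F_def prod_alg_def Luk_def)
    qed
    show "f (himp (Luk a) v w) = himp (prod_alg (Delta I J K)) (f v) (f w)"
    proof
      fix d show "f (himp (Luk a) v w) d = himp (prod_alg (Delta I J K)) (f v) (f w) d"
        using compDa hone_idem[of d] mm unfolding D_def[symmetric]
        by (auto simp: f_def F_def prod_alg_def Luk_def)
    qed
  qed
qed


end
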